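(* Let $G=(g_1,\dots,g_k)\in\mathbb{N}_0^k$ be telescopic with $g_1>0$ and $c(G)=(c_2,\dots,c_k)$, and let $h_j=c_jg_j$ for $2\le j\le k$. Then $G$ is minimal if and only if $g_i\ne h_j$ for all $i\in\{1,\dots,k\}$ and all $j\in\{2,\dots,k\}$.
   Context: For $G=(g_1,\dots,g_k)\in\mathbb{N}_0^k$, $\langle G\rangle$ is the set of $\mathbb{N}_0$-linear combinations of its entries; $G$ is minimal if $\langle G''\rangle\ne\langle G\rangle$ for every proper subsequence $G''$. Let $G_i=(g_1,\dots,g_i)$, $d_i=\gcd(G_i)$, $c_j=d_{j-1}/d_j$ for $2\le j\le k$ (well defined since $g_1>0$). $G$ is telescopic if $c_jg_j\in\langle G_{j-1}\rangle$ for all $2\le j\le k$. *)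

theory Defs
  imports Main "HOL-Library.Sublist"
begin

text \<open>Sequences G = (g_1,...,g_k) are lists of naturals; g_i = G ! (i - 1).\<close>

definition gen :: "nat list \<Rightarrow> nat set" where
  "gen G = {(\<Sum>i<length G. a i * G ! i) | a :: nat \<Rightarrow> nat. True}"

definition minimal_gens :: "nat list \<Rightarrow> bool" where
  "minimal_gens G \<longleftrightarrow> (\<forall>G''. subseq G'' G \<and> G'' \<noteq> G \<longrightarrow> gen G'' \<noteq> gen G)"

definition dgcd :: "nat list \<Rightarrow> nat \<Rightarrow> nat" where
  "dgcd G i = Gcd (set (take i G))"

definition cc :: "nat list \<Rightarrow> nat \<Rightarrow> nat" where
  "cc G j = dgcd G (j - 1) div dgcd G j"

definition telescopic :: "nat list \<Rightarrow> bool" where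
  "telescopic G \<longleftrightarrow> (\<forall>j\<in>{2..length G}. cc G j * G ! (j - 1) \<in> gen (take (j - 1) G))"

end

theory Submission
  imports Defs
begin

lemma gen_Nil: "gen [] = {0}"
  by (simp add: gen_def)

lemma gen_Cons: "gen (x # xs) = {t * x + a | t a. a \<in> gen xs}"
proof (intro set_eqI iffI)
  fix y assume "y \<in> gen (x # xs)"
  then obtain a where y: "y = (\<Sum>i<Suc (length xs). a i * (x # xs) ! i)"
    by (auto simp: gen_def)
  have "y = a 0 * x + (\<Sum>i<length xs. a (Suc i) * xs ! i)"
    unfolding y sum.lessThan_Suc_shift by simp
  moreover have "(\<Sum>i<length xs. a (Suc i) * xs ! i) \<in> gen xs"
    unfolding gen_def by (rule CollectI, rule exI[where x="\<lambda>i. a (Suc i)"], simp)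
  ultimately show "y \<in> {t * x + a | t a. a \<in> gen xs}" by blast
next
  fix y assume "y \<in> {t * x + a | t a. a \<in> gen xs}"
  then obtain t b where y: "y = t * x + (\<Sum>i<length xs. b i * xs ! i)"
    by (auto simp: gen_def)
  define a where "a = case_nat t b"
  have "y = (\<Sum>i<Suc (length xs). a i * (x # xs) ! i)"
    unfolding y sum.lessThan_Suc_shift by (simp add: a_def)
  then show "y \<in> gen (x # xs)" unfolding gen_def by auto
qed

lemma gen_zero: "0 \<in> gen xs"
  by (induction xs) (auto simp: gen_Nil gen_Cons)

lemma gen_add: "a \<in> gen xs \<Longrightarrow> b \<in> gen xs \<Longrightarrow> a + b \<in> gen xs"
proof (induction xs arbitrary: a b)
  case Nil then show ?case by (simp add: gen_Nil)
next
  case (Cons x xs)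
  from Cons.prems obtain t1 a1 t2 a2 where "a = t1 * x + a1" "a1 \<in> gen xs"
    "b = t2 * x + a2" "a2 \<in> gen xs" by (auto simp: gen_Cons)
  with Cons.IH[of a1 a2] have "a + b = (t1 + t2) * x + (a1 + a2)" "a1 + a2 \<in> gen xs"
    by (auto simp: algebra_simps)
  then show ?case by (auto simp: gen_Cons)
qed

lemma gen_mult: "a \<in> gen xs \<Longrightarrow> t * a \<in> gen xs"
  by (induction t) (auto simp: gen_zero gen_add)

lemma gen_mem: "x \<in> set xs \<Longrightarrow> x \<in> gen xs"
proof (induction xs)
  case Nil then show ?case by simp
next
  case (Cons y xs)
  then show ?case
  proof (cases "x = y")
    case True
    then have "x = 1 * y + 0" by simp
    then show ?thesis unfolding gen_Cons using gen_zero[of xs] by blast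
  next
    case False
    then have "x \<in> gen xs" using Cons by auto
    then have "x = 0 * y + x" by simp
    then show ?thesis unfolding gen_Cons using \<open>x \<in> gen xs\<close> by blast
  qed
qed

lemma gen_append: "gen (xs @ ys) = {a + b | a b. a \<in> gen xs \<and> b \<in> gen ys}"
proof (induction xs)
  case Nil then show ?case by (auto simp: gen_Nil)
next
  case (Cons x xs)
  show ?case
  proof (intro set_eqI iffI)
    fix z assume "z \<in> gen ((x # xs) @ ys)"
    then obtain t a b where "z = t * x + (a + b)" "a \<in> gen xs" "b \<in> gen ys"
      unfolding append_Cons gen_Cons Cons.IH by blast
    moreover have "z = (t * x + a) + b" using calculation(1) by simp
    ultimately show "z \<in> {a + b | a b. a \<in> gen (x # xs) \<and> b \<in> gen ys}"
      unfolding gen_Cons by blast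
  next
    fix z assume "z \<in> {a + b | a b. a \<in> gen (x # xs) \<and> b \<in> gen ys}"
    then obtain t a b where "z = (t * x + a) + b" "a \<in> gen xs" "b \<in> gen ys"
      unfolding gen_Cons by blast
    moreover have "z = t * x + (a + b)" using calculation(1) by simp
    ultimately show "z \<in> gen ((x # xs) @ ys)"
      unfolding append_Cons gen_Cons Cons.IH by blast
  qed
qed

lemma gen_dvd: "(\<And>x. x \<in> set xs \<Longrightarrow> d dvd x) \<Longrightarrow> y \<in> gen xs \<Longrightarrow> d dvd y"
proof (induction xs arbitrary: y)
  case Nil then show ?case by (simp add: gen_Nil)
next
  case (Cons x xs)
  then show ?case by (auto simp: gen_Cons)
qed

lemma subseq_gen: "subseq H G \<Longrightarrow> gen H \<subseteq> gen G"
proof (induction rule: list_emb.induct)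
  case (list_emb_Nil ys) then show ?case using gen_zero by (auto simp: gen_Nil)
next
  case (list_emb_Cons xs ys y)
  show ?case
  proof
    fix z assume "z \<in> gen xs"
    then have "z \<in> gen ys" using list_emb_Cons.IH by blast
    moreover have "z = 0 * y + z" by simp
    ultimately show "z \<in> gen (y # ys)" unfolding gen_Cons by blast
  qed
next
  case (list_emb_Cons2 x y xs ys)
  then show ?case by (auto simp: gen_Cons)
qed

definition remi :: "nat \<Rightarrow> nat list \<Rightarrow> nat list" where
  "remi i xs = take i xs @ drop (Suc i) xs"

lemma gen_remi: "i < length xs \<Longrightarrow> gen xs = {b * (xs ! i) + s | b s. s \<in> gen (remi i xs)}"
proof -
  assume i: "i < length xs"
  have "xs = take i xs @ (xs ! i) # drop (Suc i) xs" using i by (simp add: id_take_nth_drop)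
  then have "gen xs = gen (take i xs @ (xs ! i) # drop (Suc i) xs)" by simp
  also have "\<dots> = {b * (xs ! i) + s | b s. s \<in> gen (remi i xs)}"
  proof (intro set_eqI iffI)
    fix z assume "z \<in> gen (take i xs @ (xs ! i) # drop (Suc i) xs)"
    then obtain a t c where "z = a + (t * (xs ! i) + c)" "a \<in> gen (take i xs)"
      "c \<in> gen (drop (Suc i) xs)"
      unfolding gen_append gen_Cons by blast
    moreover have "z = t * (xs ! i) + (a + c)" using calculation(1) by simp
    ultimately show "z \<in> {b * (xs ! i) + s | b s. s \<in> gen (remi i xs)}"
      unfolding remi_def gen_append by blast
  next
    fix z assume "z \<in> {b * (xs ! i) + s | b s. s \<in> gen (remi i xs)}"
    then obtain a t c where "z = t * (xs ! i) + (a + c)" "a \<in> gen (take i xs)"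
      "c \<in> gen (drop (Suc i) xs)"
      unfolding remi_def gen_append by blast
    moreover have "z = a + (t * (xs ! i) + c)" using calculation(1) by simp
    ultimately show "z \<in> gen (take i xs @ (xs ! i) # drop (Suc i) xs)"
      unfolding gen_append gen_Cons by blast
  qed
  finally show ?thesis .
qed

lemma subseq_remi: "subseq (remi i xs) xs"
proof -
  have "suffix (drop (Suc i) xs) (drop i xs)"
    by (metis Suc_eq_plus1 add.commute drop_drop suffix_drop)
  then have "subseq (drop (Suc i) xs) (drop i xs)" by (simp add: suffix_imp_subseq)
  then have "subseq (take i xs @ drop (Suc i) xs) (take i xs @ drop i xs)"
    using subseq_append' by blast
  then show ?thesis by (metis append_take_drop_id remi_def)
qed

lemma length_remi: "i < length xs \<Longrightarrow> length (remi i xs) < length xs"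
  by (simp add: remi_def)

lemma subseq_neq_remi: "subseq H G \<Longrightarrow> H \<noteq> G \<Longrightarrow> \<exists>i<length G. subseq H (remi i G)"
proof (induction rule: list_emb.induct)
  case (list_emb_Nil ys)
  then show ?case by auto
next
  case (list_emb_Cons xs ys y)
  then show ?case by (rule_tac x=0 in exI) (simp add: remi_def)
next
  case (list_emb_Cons2 x y xs ys)
  then obtain i where "i < length ys" "subseq xs (remi i ys)" by auto
  then show ?case using list_emb_Cons2
    by (rule_tac x="Suc i" in exI) (simp add: remi_def)
qed

lemma minimal_iff: "minimal_gens G \<longleftrightarrow> (\<forall>p<length G. G ! p \<notin> gen (remi p G))"
proof
  assume m: "minimal_gens G"
  show "\<forall>p<length G. G ! p \<notin> gen (remi p G)"
  proof (intro allI impI notI)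
    fix p assume p: "p < length G" and g: "G ! p \<in> gen (remi p G)"
    have "gen G \<subseteq> gen (remi p G)"
    proof
      fix z assume "z \<in> gen G"
      then obtain b s where bs: "z = b * (G ! p) + s" "s \<in> gen (remi p G)"
        using gen_remi[OF p] by blast
      have "b * (G ! p) \<in> gen (remi p G)" using gen_mult[OF g] .
      then show "z \<in> gen (remi p G)" using gen_add bs by simp
    qed
    then have "gen (remi p G) = gen G" using subseq_gen[OF subseq_remi] by blast
    moreover have "remi p G \<noteq> G" using length_remi[OF p] by auto
    moreover have "subseq (remi p G) G \<and> remi p G \<noteq> G \<longrightarrow> gen (remi p G) \<noteq> gen G"
      using m unfolding minimal_gens_def by (rule allE)
    ultimately show False using subseq_remi by simp
  qed
next
  assume h: "\<forall>p<length G. G ! p \<notin> gen (remi p G)"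
  show "minimal_gens G" unfolding minimal_gens_def
  proof (intro allI impI)
    fix H assume "subseq H G \<and> H \<noteq> G"
    then obtain p where p: "p < length G" "subseq H (remi p G)"
      using subseq_neq_remi by blast
    have "gen H \<subseteq> gen (remi p G)" using subseq_gen[OF p(2)] .
    moreover have "G ! p \<in> gen G" using gen_mem nth_mem p(1) by blast
    ultimately show "gen H \<noteq> gen G" using h p(1) by blast
  qed
qed

lemma set_remi: "set (remi p xs) \<subseteq> set xs"
  unfolding remi_def using set_take_subset set_drop_subset by fastforce

lemma nth_in_remi: "q < length G \<Longrightarrow> q \<noteq> p \<Longrightarrow> G ! q \<in> set (remi p G)"
proof -
  assume q: "q < length G" "q \<noteq> p"
  show ?thesis
  proof (cases "q < p")
    case True
    then have "G ! q = take p G ! q" by simp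
    moreover have "q < length (take p G)" using True q by simp
    ultimately show ?thesis unfolding remi_def by (metis Un_iff nth_mem set_append)
  next
    case False
    then have "G ! q = drop (Suc p) G ! (q - Suc p)" using q by simp
    moreover have "q - Suc p < length (drop (Suc p) G)" using False q by simp
    ultimately show ?thesis unfolding remi_def by (metis Un_iff nth_mem set_append)
  qed
qed

lemma dgcd_snoc: "i \<le> length xs \<Longrightarrow> dgcd (xs @ [x]) i = dgcd xs i"
  by (simp add: dgcd_def)

lemma cc_snoc: "j \<le> length xs \<Longrightarrow> cc (xs @ [x]) j = cc xs j"
  by (simp add: cc_def dgcd_snoc)

lemma back_dir:
  "G \<noteq> [] \<Longrightarrow> G ! 0 > 0 \<Longrightarrow> telescopic G \<Longrightarrow>
   (\<forall>i\<in>{1..length G}. \<forall>j\<in>{2..length G}. G ! (i - 1) \<noteq> cc G j * G ! (j - 1)) \<Longrightarrow>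
   \<forall>p<length G. G ! p \<notin> gen (remi p G)"
proof (induction G rule: rev_induct)
  case Nil then show ?case by simp
next
  case (snoc x xs)
  show ?case
  proof (cases "xs = []")
    case True
    then show ?thesis using snoc.prems by (auto simp: remi_def gen_Nil)
  next
    case False
    let ?G = "xs @ [x]"
    define n where "n = length xs"
    have n0: "n > 0" using False n_def by simp
    have x0: "xs ! 0 > 0" using snoc.prems(2) n0 n_def by (simp add: nth_append)
    have tele: "telescopic xs"
      unfolding telescopic_def
    proof
      fix j assume j: "j \<in> {2..length xs}"
      have "cc ?G j * ?G ! (j - 1) \<in> gen (take (j - 1) ?G)"
        using snoc.prems(3) j unfolding telescopic_def by auto
      moreover have "j - 1 < length xs" using j by auto
      ultimately show "cc xs j * xs ! (j - 1) \<in> gen (take (j - 1) xs)"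
        using j by (simp add: cc_snoc nth_append)
    qed
    have cond: "\<forall>i\<in>{1..length xs}. \<forall>j\<in>{2..length xs}. xs ! (i - 1) \<noteq> cc xs j * xs ! (j - 1)"
    proof (intro ballI)
      fix i j assume i: "i \<in> {1..length xs}" and j: "j \<in> {2..length xs}"
      have "?G ! (i - 1) \<noteq> cc ?G j * ?G ! (j - 1)" using snoc.prems(4) i j by auto
      moreover have "j - 1 < length xs" "i - 1 < length xs" using i j by auto
      ultimately show "xs ! (i - 1) \<noteq> cc xs j * xs ! (j - 1)"
        using i j by (simp add: cc_snoc nth_append)
    qed
    have IH: "\<forall>p<length xs. xs ! p \<notin> gen (remi p xs)"
      using snoc.IH[OF False x0 tele cond] .
    define D where "D = Gcd (set xs)"
    have "xs ! 0 \<in> set xs" using n0 n_def by simp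
    then have D0: "D \<noteq> 0" unfolding D_def using x0
      by (metis Gcd_dvd dvd_0_left_iff less_numeral_extra(3))
    define c where "c = D div gcd D x"
    have ccG: "cc ?G (Suc n) = c"
      unfolding cc_def dgcd_def c_def D_def n_def using False by (simp add: gcd.commute)
    have hgen: "c * x \<in> gen xs"
    proof -
      have "Suc n \<in> {2..length ?G}" using n0 unfolding n_def by (simp add: Suc_le_eq)
      then have "cc ?G (Suc n) * ?G ! (Suc n - 1) \<in> gen (take (Suc n - 1) ?G)"
        using snoc.prems(3) unfolding telescopic_def by blast
      then show ?thesis using ccG n_def by simp
    qed
    have condx: "\<And>q. q \<le> n \<Longrightarrow> ?G ! q \<noteq> c * x"
    proof -
      fix q assume "q \<le> n"
      then have "Suc q \<in> {1..length ?G}" "Suc n \<in> {2..length ?G}" using n0 unfolding n_def by (auto simp add: Suc_le_eq)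
      then have "?G ! (Suc q - 1) \<noteq> cc ?G (Suc n) * ?G ! (Suc n - 1)"
        using snoc.prems(4) by blast
      then show "?G ! q \<noteq> c * x" using ccG n_def by simp
    qed
    have Ddvd: "\<And>y. y \<in> gen xs \<Longrightarrow> D dvd y"
      using gen_dvd[of xs D] unfolding D_def by (simp add: Gcd_dvd)
    show ?thesis
    proof (intro allI impI notI)
      fix p assume p: "p < length ?G" and g: "?G ! p \<in> gen (remi p ?G)"
      show False
      proof (cases "p = n")
        case True
        then have "remi p ?G = xs" "?G ! p = x" using n_def by (auto simp: remi_def)
        then have "x \<in> gen xs" using g by simp
        then have "D dvd x" using Ddvd by blast
        then have "gcd D x = D" by simp
        then have "c = 1" using D0 c_def by simp
        then show False using condx[of n] n_def by simp
      next
        case False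
        then have pn: "p < n" using p n_def by simp
        define g where "g = xs ! p"
        have Gp: "?G ! p = g" using pn n_def g_def by (simp add: nth_append)
        have rem: "remi p ?G = remi p xs @ [x]" using pn n_def by (simp add: remi_def)
        obtain r a where ra: "g = r + a * x" "r \<in> gen (remi p xs)"
          using g unfolding Gp rem gen_append gen_Cons gen_Nil by auto
        have "g \<in> gen xs" using gen_mem pn n_def g_def by simp
        then have "D dvd g" using Ddvd by blast
        moreover have "r \<in> gen xs" using ra(2) subseq_gen[OF subseq_remi] by blast
        then have "D dvd r" using Ddvd by blast
        ultimately have "D dvd a * x" using ra(1) by (simp add: dvd_add_right_iff)
        define e where "e = gcd D x"
        have e0: "e > 0" using D0 e_def by simp
        have De: "D = c * e" unfolding c_def e_def by simp
        have xe: "x = (x div e) * e" unfolding e_def by simp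
        have "c * e dvd (a * (x div e)) * e" using \<open>D dvd a * x\<close> De xe
          by (metis mult.assoc)
        then have "c dvd a * (x div e)" using e0 by simp
        moreover have "coprime c (x div e)" unfolding c_def e_def
          using div_gcd_coprime D0 by blast
        ultimately have "c dvd a" by (simp add: coprime_dvd_mult_left_iff)
        then obtain t where t: "a = c * t" by blast
        show False
        proof (cases "t = 0")
          case True
          then have "g \<in> gen (remi p xs)" using ra t by simp
          then show False using IH pn n_def g_def by blast
        next
          case False
          obtain b s where bs: "c * x = b * g + s" "s \<in> gen (remi p xs)"
            using hgen gen_remi[of p xs] pn n_def g_def by auto
          show False
          proof (cases "b = 0")
            case True
            then have "c * x \<in> gen (remi p xs)" using bs by simp
            then have "g \<in> gen (remi p xs)" using ra t gen_add gen_mult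
              by (metis mult.commute mult.left_commute)
            then show False using IH pn n_def g_def by blast
          next
            case False
            have "g \<le> b * g" using False by simp
            then have le1: "g \<le> c * x" using bs(1) by linarith
            have "c * x \<le> t * (c * x)" using \<open>t \<noteq> 0\<close> by simp
            also have "\<dots> = a * x" using t by simp
            also have "\<dots> \<le> g" using ra(1) by simp
            finally have "g = c * x" using le1 by simp
            then show False using condx[of p] pn Gp by simp
          qed
        qed
      qed
    qed
  qed
qed

theorem mainTheorem5:
  fixes G :: "nat list"
  assumes "G \<noteq> []" and "G ! 0 > 0" and "telescopic G"
  shows "minimal_gens G \<longleftrightarrow>
    (\<forall>i\<in>{1..length G}. \<forall>j\<in>{2..length G}. G ! (i - 1) \<noteq> cc G j * G ! (j - 1))"
proof
  assume m: "minimal_gens G"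
  show "\<forall>i\<in>{1..length G}. \<forall>j\<in>{2..length G}. G ! (i - 1) \<noteq> cc G j * G ! (j - 1)"
  proof (intro ballI notI)
    fix i j assume i: "i \<in> {1..length G}" and j: "j \<in> {2..length G}"
      and eq: "G ! (i - 1) = cc G j * G ! (j - 1)"
    have nm: "\<forall>p<length G. G ! p \<notin> gen (remi p G)" using m minimal_iff by blast
    show False
    proof (cases "i = j")
      case False
      have "G ! (j - 1) \<in> set (remi (i - 1) G)"
        using nth_in_remi[of "j - 1" G "i - 1"] i j False by auto
      then have "G ! (i - 1) \<in> gen (remi (i - 1) G)" using eq gen_mem gen_mult by simp
      then show False using nm i by auto
    next
      case True
      have "G ! (j - 1) \<in> gen (remi (j - 1) G)"
      proof (cases "G ! (j - 1) = 0")
        case True then show ?thesis using gen_zero by simp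
      next
        case False
        then have "cc G j = 1" using eq \<open>i = j\<close> by simp
        then have "G ! (j - 1) \<in> gen (take (j - 1) G)"
          using assms(3) j unfolding telescopic_def by force
        then have "G ! (j - 1) + 0 \<in> gen (take (j - 1) G @ drop (Suc (j - 1)) G)"
          unfolding gen_append using gen_zero by blast
        then show ?thesis by (simp add: remi_def)
      qed
      then show False using nm j by auto
    qed
  qed
next
  assume "\<forall>i\<in>{1..length G}. \<forall>j\<in>{2..length G}. G ! (i - 1) \<noteq> cc G j * G ! (j - 1)"
  then show "minimal_gens G" using back_dir[OF assms] minimal_iff by blast
qed

end
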